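(* There is a constant $c>0$ depending only on $\alpha$ such that the following holds. Suppose $0<A<B$ and $\Lambda,\Gamma\ge0$ with $A\pm\Lambda$ and $B\pm\Gamma$ integers, $\Lambda<A$, $B-\Gamma\ge A$, and $\Gamma/B\le\frac18\Lambda/A$. Then \[ \Pr\Bigl[\bigcup_{\ell\le\Gamma}BINGO(A+\Lambda,A-\Lambda;B+\ell,B-\ell)\Bigr]\le e^{-c\Lambda^2/A}, \] where the union is over all $\ell\le\Gamma$ (including negative $\ell$) with $B\pm\ell$ integers.
   Context: Fix $\alpha>1$. Consider the Markov chain on $\mathbb N\times\mathbb N$ which from state $(i,j)$ moves to $(i+1,j)$ with probability $i^\alpha/(i^\alpha+j^\alpha)$ and to $(i,j+1)$ with probability $j^\alpha/(i^\alpha+j^\alpha)$. For states $(a,b)$, $(c,d)$, $BINGO(a,b;c,d)$ denotes the event that this chain, started at state $(a,b)$, visits the state $(c,d)$ (empty if $(c,d)$ is not coordinatewise $\ge(a,b)$). *)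

theory Defs
  imports "HOL-Probability.Probability"
begin

definition step_pmf :: "real \<Rightarrow> nat \<times> nat \<Rightarrow> (nat \<times> nat) pmf" where
  "step_pmf \<alpha> s = (case s of (i, j) \<Rightarrow>
     map_pmf (\<lambda>b. if b then (i + 1, j) else (i, j + 1))
       (bernoulli_pmf (real i powr \<alpha> / (real i powr \<alpha> + real j powr \<alpha>))))"

fun traj :: "real \<Rightarrow> nat \<times> nat \<Rightarrow> nat \<Rightarrow> (nat \<times> nat) list pmf" where
  "traj \<alpha> s 0 = return_pmf [s]"
| "traj \<alpha> s (Suc k) = traj \<alpha> s k \<bind> (\<lambda>p. map_pmf (\<lambda>x. p @ [x]) (step_pmf \<alpha> (last p)))"

definition visit_prob :: "real \<Rightarrow> nat \<times> nat \<Rightarrow> (nat \<times> nat) set \<Rightarrow> real" where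
  "visit_prob \<alpha> s T = (SUP k::nat. measure_pmf.prob (traj \<alpha> s k) {p. set p \<inter> T \<noteq> {}})"

end

theory Submission
  imports Defs
begin


lemma P_bounds:
  fixes a b :: real assumes "0 \<le> a" "0 \<le> b"
  shows "0 \<le> a/(a+b)" "a/(a+b) \<le> 1"
  using assms by (auto simp: divide_le_eq)

lemma step_exp:
  "measure_pmf.expectation (step_pmf \<alpha> (i,j)) f =
     f (i+1,j) * (real i powr \<alpha> / (real i powr \<alpha> + real j powr \<alpha>))
   + f (i,j+1) * (1 - real i powr \<alpha> / (real i powr \<alpha> + real j powr \<alpha>))"
  unfolding step_pmf_def using P_bounds[of "real i powr \<alpha>" "real j powr \<alpha>"] by simp

lemma traj_fin: "finite (set_pmf (traj \<alpha> s k))"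
  by (induction k) (auto simp: step_pmf_def split: prod.splits)

lemma traj_last: "p \<in> set_pmf (traj \<alpha> s k) \<Longrightarrow> p \<noteq> [] \<and> fst (last p) + snd (last p) = fst s + snd s + k"
proof (induction k arbitrary: p)
  case 0 then show ?case by simp
next
  case (Suc k)
  then obtain q x where q: "q \<in> set_pmf (traj \<alpha> s k)" "x \<in> set_pmf (step_pmf \<alpha> (last q))" "p = q @ [x]" by auto
  obtain i j where ij: "last q = (i,j)" by force
  have "x = (i+1,j) \<or> x = (i,j+1)" using q(2) ij by (auto simp: step_pmf_def)
  then show ?case using Suc.IH[OF q(1)] q(3) ij by auto
qed

lemma exp_quad: fixes x :: real assumes "\<bar>x\<bar> \<le> 1" shows "exp x \<le> 1 + x + x^2"
proof (cases "x \<ge> 0")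
  case True then show ?thesis using exp_bound assms by auto
next
  case False
  have e: "1 + (-x) + (-x)^2/2 \<le> exp (-x)" using exp_lower_Taylor_quadratic[of "-x"] False by simp
  have pos: "0 < 1 - x + x^2/2" using False by (simp add: add_pos_nonneg)
  have "exp x = 1 / exp (-x)" by (simp add: exp_minus field_simps)
  also have "\<dots> \<le> 1 / (1 - x + x^2/2)" using e pos by (intro divide_left_mono) auto
  also have "\<dots> \<le> 1 + x + x^2"
  proof -
    have "(1 + x + x^2) * (1 - x + x^2/2) = 1 + x^2/2 - x^3/2 + x^4/2"
      by (simp add: algebra_simps power2_eq_square power3_eq_cube power4_eq_xxxx add_divide_distrib diff_divide_distrib)
    also have "\<dots> \<ge> 1"
    proof -
      have "x^3 < 0" using False by (simp add: power3_eq_cube mult_neg_pos mult_pos_neg zero_less_mult_iff)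
      moreover have "x^4 \<ge> 0" "x^2 \<ge> 0" by auto
      ultimately show ?thesis by linarith
    qed
    finally show ?thesis using pos by (simp add: divide_le_eq)
  qed
  finally show ?thesis .
qed


lemma frac_add: fixes a b n m :: real assumes "n \<noteq> 0" "m \<noteq> 0"
  shows "a/n + b/(n*m) = (a*m+b)/(n*m)" "a/n - b/(n*m) = (a*m-b)/(n*m)"
  using assms by (simp_all add: add_divide_distrib diff_divide_distrib)

lemma drift: fixes X Y \<alpha> :: real assumes "X > Y" "Y \<ge> 0" "\<alpha> > 1"
  shows "Y powr \<alpha> * X \<le> X powr \<alpha> * Y"
proof (cases "Y = 0")
  case True then show ?thesis using assms by simp
next
  case False
  hence Y: "Y > 0" using assms by simp
  have "Y powr (\<alpha> - 1) \<le> X powr (\<alpha> - 1)" using assms Y by (intro powr_mono2) auto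
  hence "X * Y * Y powr (\<alpha> - 1) \<le> X * Y * X powr (\<alpha> - 1)" using assms Y by (intro mult_left_mono) auto
  moreover have "Y powr \<alpha> = Y * Y powr (\<alpha> - 1)" using Y by (simp add: powr_diff)
  moreover have "X powr \<alpha> = X * X powr (\<alpha> - 1)" using Y assms by (simp add: powr_diff)
  ultimately show ?thesis by (simp add: algebra_simps)
qed

lemma key_real:
  fixes X Y \<alpha> lam :: real
  assumes XY: "X > Y" "Y \<ge> 0" and a: "\<alpha> > 1" and lam: "lam \<ge> 0" "2*lam \<le> X + Y + 1"
  defines "P \<equiv> X powr \<alpha> / (X powr \<alpha> + Y powr \<alpha>)"
  defines "n \<equiv> X + Y"
  shows "P * exp (-lam * ((X + 1 - Y)/(n+1)) + 4*lam^2/(n+1))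
       + (1 - P) * exp (-lam * ((X - (Y + 1))/(n+1)) + 4*lam^2/(n+1))
       \<le> exp (-lam * ((X - Y)/n) + 4*lam^2/n)"
proof -
  have n: "n > 0" using XY n_def by simp
  have Xp: "X > 0" using XY by simp
  define t1 where "t1 = - lam * (2*Y/(n*(n+1)))"
  define t2 where "t2 = lam * (2*X/(n*(n+1)))"
  define d where "d = 4*lam^2/(n*(n+1))"
  define h where "h = -lam * ((X - Y)/n) + 4*lam^2/n"
  have nz: "n + 1 \<noteq> 0" using n by simp
  have f1: "(X+1-Y)/(n+1) = (X-Y)/n + 2*Y/(n*(n+1))"
  proof -
    have "(X-Y)/n + 2*Y/(n*(n+1)) = ((X-Y)*(n+1) + 2*Y)/(n*(n+1))" using n nz frac_add by simp
    also have "(X-Y)*(n+1) + 2*Y = (X+1-Y)*n" using n_def by (simp add: algebra_simps)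
    also have "(X+1-Y)*n/(n*(n+1)) = (X+1-Y)/(n+1)" using n by simp
    finally show ?thesis by simp
  qed
  have f2: "(X-(Y+1))/(n+1) = (X-Y)/n - 2*X/(n*(n+1))"
  proof -
    have "(X-Y)/n - 2*X/(n*(n+1)) = ((X-Y)*(n+1) - 2*X)/(n*(n+1))" using n nz frac_add by simp
    also have "(X-Y)*(n+1) - 2*X = (X-(Y+1))*n" using n_def by (simp add: algebra_simps)
    also have "(X-(Y+1))*n/(n*(n+1)) = (X-(Y+1))/(n+1)" using n by simp
    finally show ?thesis by simp
  qed
  have f3: "4*lam^2/(n+1) = 4*lam^2/n - d"
  proof -
    have "4*lam^2/n - 4*lam^2/(n*(n+1)) = (4*lam^2*(n+1) - 4*lam^2)/(n*(n+1))" using n nz frac_add by simp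
    also have "4*lam^2*(n+1) - 4*lam^2 = 4*lam^2*n" by (simp add: algebra_simps)
    finally show ?thesis using n unfolding d_def by simp
  qed
  have e1: "-lam * ((X + 1 - Y)/(n+1)) + 4*lam^2/(n+1) = h + t1 - d"
    unfolding f1 f3 h_def t1_def by (simp add: algebra_simps)
  have e2: "-lam * ((X - (Y + 1))/(n+1)) + 4*lam^2/(n+1) = h + t2 - d"
    unfolding f2 f3 h_def t2_def by (simp add: algebra_simps)
  have Ppos: "0 < X powr \<alpha>" using Xp by simp
  have Sp: "0 < X powr \<alpha> + Y powr \<alpha>" using Ppos by (simp add: add_pos_nonneg)
  have P01: "0 \<le> P" "P \<le> 1" unfolding P_def using Ppos Sp by (auto simp: divide_le_eq)
  have Pdrift: "(1 - P) * X \<le> P * Y"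
  proof -
    have "1 - P = Y powr \<alpha> / (X powr \<alpha> + Y powr \<alpha>)" unfolding P_def using Ppos
      using Sp by (simp add: field_simps)
    thus ?thesis unfolding P_def using drift[OF XY a] Sp
      by (simp add: divide_simps)
  qed
  have c: "2*lam/(n+1) \<le> 1" using lam n n_def by simp
  have r1: "Y / n \<le> 1" "X / n \<le> 1" using n n_def XY by auto
  have t1b: "\<bar>t1\<bar> \<le> 1"
  proof -
    have "\<bar>t1\<bar> = (2*lam/(n+1)) * (Y/n)" unfolding t1_def using lam XY n by (simp add: abs_mult field_simps)
    also have "\<dots> \<le> 1 * 1" using c r1 lam XY n by (intro mult_mono) auto
    finally show ?thesis by simp
  qed
  have t2b: "\<bar>t2\<bar> \<le> 1"
  proof -
    have "\<bar>t2\<bar> = (2*lam/(n+1)) * (X/n)" unfolding t2_def using lam XY n by (simp add: abs_mult field_simps)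
    also have "\<dots> \<le> 1 * 1" using c r1 lam XY n by (intro mult_mono) auto
    finally show ?thesis by simp
  qed
  have q1: "t1^2 \<le> d"
  proof -
    have "t1^2 = d * (Y^2/(n*(n+1)))" unfolding t1_def d_def using n by (simp add: field_simps power2_eq_square)
    also have "\<dots> \<le> d * 1"
    proof (intro mult_left_mono)
      have "Y^2 \<le> n * (n+1)" using XY n n_def by (simp add: power2_eq_square mult_mono)
      thus "Y^2/(n*(n+1)) \<le> 1" using n by (simp add: divide_le_eq)
      show "0 \<le> d" unfolding d_def using n by simp
    qed
    finally show ?thesis by simp
  qed
  have q2: "t2^2 \<le> d"
  proof -
    have "t2^2 = d * (X^2/(n*(n+1)))" unfolding t2_def d_def using n by (simp add: field_simps power2_eq_square)
    also have "\<dots> \<le> d * 1"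
    proof (intro mult_left_mono)
      have "X^2 \<le> n * (n+1)" using XY n n_def by (simp add: power2_eq_square mult_mono)
      thus "X^2/(n*(n+1)) \<le> 1" using n by (simp add: divide_le_eq)
      show "0 \<le> d" unfolding d_def using n by simp
    qed
    finally show ?thesis by simp
  qed
  have lin: "P * t1 + (1 - P) * t2 \<le> 0"
  proof -
    define c where "c = 2*lam/(n*(n+1))"
    have tt: "t1 = -(c * Y)" "t2 = c * X" unfolding t1_def t2_def c_def by simp_all
    have "P * t1 + (1 - P) * t2 = c * ((1-P)*X - P*Y)"
      unfolding tt by (simp add: algebra_simps)
    also have "\<dots> \<le> 0" using Pdrift lam n unfolding c_def by (intro mult_nonneg_nonpos) auto
    finally show ?thesis .
  qed
  have "P * exp t1 + (1-P) * exp t2 \<le> P * (1 + t1 + t1^2) + (1-P) * (1 + t2 + t2^2)"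
    using exp_quad[OF t1b] exp_quad[OF t2b] P01 by (intro add_mono mult_left_mono) auto
  also have "\<dots> = 1 + (P * t1 + (1 - P) * t2) + (P * t1^2 + (1-P) * t2^2)" by (simp add: algebra_simps)
  also have "\<dots> \<le> 1 + 0 + (P * d + (1-P) * d)"
    using lin q1 q2 P01 by (intro add_mono mult_left_mono) auto
  also have "\<dots> = 1 + d" by (simp add: algebra_simps)
  also have "\<dots> \<le> exp d" by (rule exp_ge_add_one_self[of d, simplified add.commute])
  finally have main: "P * exp t1 + (1-P) * exp t2 \<le> exp d" .
  have "P * exp (h + t1 - d) + (1 - P) * exp (h + t2 - d) = exp h * exp (-d) * (P * exp t1 + (1-P) * exp t2)"
    by (simp add: exp_add exp_diff exp_minus field_simps)
  also have "\<dots> \<le> exp h * exp (-d) * exp d" using main by (intro mult_left_mono) auto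
  also have "\<dots> = exp h" by (simp add: exp_minus)
  finally show ?thesis unfolding e1 e2 h_def .
qed

definition hh :: "real \<Rightarrow> nat \<times> nat \<Rightarrow> real" where
  "hh lam s = exp (-lam * ((real (fst s) - real (snd s))/(real (fst s) + real (snd s)))
      + 4*lam^2/(real (fst s) + real (snd s)))"

definition gg :: "real \<Rightarrow> real \<Rightarrow> nat \<times> nat \<Rightarrow> real" where
  "gg lam th s = min (hh lam s) (exp (-lam*th))"

definition GG :: "real \<Rightarrow> real \<Rightarrow> (nat \<times> nat) set \<Rightarrow> (nat \<times> nat) list \<Rightarrow> real" where
  "GG lam th T p = (if set p \<inter> T \<noteq> {} then exp (-lam*th) else gg lam th (last p))"

lemma gg_nonneg: "0 \<le> gg lam th s" unfolding gg_def hh_def by simp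

lemma gg_super:
  assumes a: "\<alpha> > 1" and lam: "lam \<ge> 0" "2*lam \<le> real (i+j) + 1" and th: "th \<ge> 0" and n1: "1 \<le> i + j"
  shows "gg lam th (i+1,j) * (real i powr \<alpha> / (real i powr \<alpha> + real j powr \<alpha>))
       + gg lam th (i,j+1) * (1 - real i powr \<alpha> / (real i powr \<alpha> + real j powr \<alpha>)) \<le> gg lam th (i,j)"
proof -
  define P where "P = real i powr \<alpha> / (real i powr \<alpha> + real j powr \<alpha>)"
  define K where "K = exp (-lam*th)"
  have P01: "0 \<le> P" "P \<le> 1" unfolding P_def using P_bounds by auto
  show ?thesis
  proof (cases "hh lam (i,j) \<ge> K")
    case True
    hence g: "gg lam th (i,j) = K" unfolding gg_def K_def by simp
    have "gg lam th (i+1,j) * P + gg lam th (i,j+1) * (1-P) \<le> K * P + K * (1-P)"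
      using P01 by (intro add_mono mult_right_mono) (auto simp: gg_def K_def)
    also have "\<dots> = K" by (simp add: algebra_simps)
    finally show ?thesis unfolding g P_def .
  next
    case False
    hence g: "gg lam th (i,j) = hh lam (i,j)" unfolding gg_def K_def by simp
    define X where "X = real i"
    define Y where "Y = real j"
    have n: "X + Y > 0" using n1 unfolding X_def Y_def by simp
    have lt: "-lam * ((X - Y)/(X+Y)) + 4*lam^2/(X+Y) < -lam*th"
      using False unfolding hh_def K_def X_def Y_def by simp
    have "lam * th + 4*lam^2/(X+Y) < lam * ((X - Y)/(X+Y))" using lt by simp
    moreover have "0 \<le> lam * th" "0 \<le> 4*lam^2/(X+Y)" using lam th n by auto
    ultimately have "0 < lam * ((X - Y)/(X+Y))" by linarith
    hence "0 < (X - Y)/(X+Y)" using lam(1) by (metis zero_less_mult_iff linorder_not_less)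
    hence XY: "X > Y" using n by (simp add: zero_less_divide_iff)
    have h1: "hh lam (i+1,j) = exp (-lam * ((X + 1 - Y)/((X+Y)+1)) + 4*lam^2/((X+Y)+1))"
      unfolding hh_def X_def Y_def by (simp add: add_ac)
    have h2: "hh lam (i,j+1) = exp (-lam * ((X - (Y + 1))/((X+Y)+1)) + 4*lam^2/((X+Y)+1))"
      unfolding hh_def X_def Y_def by (simp add: add_ac)
    have h0: "hh lam (i,j) = exp (-lam * ((X - Y)/(X+Y)) + 4*lam^2/(X+Y))"
      unfolding hh_def X_def Y_def by simp
    have PX: "P = X powr \<alpha> / (X powr \<alpha> + Y powr \<alpha>)" unfolding P_def X_def Y_def by simp
    have "gg lam th (i+1,j) * P + gg lam th (i,j+1) * (1-P) \<le> hh lam (i+1,j) * P + hh lam (i,j+1) * (1-P)"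
      using P01 by (intro add_mono mult_right_mono) (auto simp: gg_def)
    also have "\<dots> \<le> hh lam (i,j)"
      unfolding h1 h2 h0 PX using key_real[OF XY _ a lam(1), of] Y_def lam(2) X_def
      by (simp add: mult.commute)
    finally show ?thesis unfolding g P_def .
  qed
qed

lemma gg_T: "hh lam s \<ge> exp (-lam*th) \<Longrightarrow> gg lam th s = exp (-lam*th)"
  unfolding gg_def by simp

lemma GG_step:
  assumes a: "\<alpha> > 1" and lam: "lam \<ge> 0" "2*lam \<le> real (i+j) + 1" and th: "th \<ge> 0" and n1: "1 \<le> i + j"
    and T: "\<And>s. s \<in> T \<Longrightarrow> hh lam s \<ge> exp (-lam*th)"
    and p: "last p = (i,j)"
  shows "measure_pmf.expectation (map_pmf (\<lambda>x. p @ [x]) (step_pmf \<alpha> (last p))) (GG lam th T) \<le> GG lam th T p"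
proof -
  define P where "P = real i powr \<alpha> / (real i powr \<alpha> + real j powr \<alpha>)"
  define K where "K = exp (-lam*th)"
  have P01: "0 \<le> P" "P \<le> 1" unfolding P_def using P_bounds by auto
  have E: "measure_pmf.expectation (map_pmf (\<lambda>x. p @ [x]) (step_pmf \<alpha> (last p))) (GG lam th T)
     = GG lam th T (p @ [(i+1,j)]) * P + GG lam th T (p @ [(i,j+1)]) * (1 - P)"
    unfolding p integral_map_pmf step_exp P_def by simp
  show ?thesis
  proof (cases "set p \<inter> T \<noteq> {}")
    case True
    hence "GG lam th T (p @ [x]) = K" for x unfolding GG_def K_def by auto
    moreover have "GG lam th T p = K" using True unfolding GG_def K_def by auto
    ultimately show ?thesis unfolding E by (simp add: algebra_simps)
  next
    case False
    have gx: "GG lam th T (p @ [x]) = gg lam th x" for x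
      using False gg_T[OF T, of x] unfolding GG_def by auto
    have "GG lam th T p = gg lam th (i,j)" using False p unfolding GG_def by simp
    then show ?thesis unfolding E gx P_def using gg_super[OF a lam th n1] by simp
  qed
qed

lemma GG_traj:
  assumes a: "\<alpha> > 1" and lam: "lam \<ge> 0" "2*lam \<le> real (fst s + snd s) + 1" and th: "th \<ge> 0"
    and n1: "1 \<le> fst s + snd s"
    and T: "\<And>s. s \<in> T \<Longrightarrow> hh lam s \<ge> exp (-lam*th)"
  shows "measure_pmf.expectation (traj \<alpha> s k) (GG lam th T) \<le> hh lam s"
proof (induction k)
  case 0
  have "GG lam th T [s] \<le> hh lam s"
    unfolding GG_def using T[of s] by (auto simp: gg_def)
  then show ?case by simp
next
  case (Suc k)
  define A where "A = set_pmf (traj \<alpha> s k)"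
  have fA: "finite A" unfolding A_def by (rule traj_fin)
  have fin2: "finite (set_pmf (map_pmf (\<lambda>x. p @ [x]) (step_pmf \<alpha> (last p))))" for p
    by (auto simp: step_pmf_def split: prod.splits)
  have "measure_pmf.expectation (traj \<alpha> s (Suc k)) (GG lam th T)
      = (\<Sum>a\<in>A. pmf (traj \<alpha> s k) a *\<^sub>R measure_pmf.expectation (map_pmf (\<lambda>x. a @ [x]) (step_pmf \<alpha> (last a))) (GG lam th T))"
    unfolding traj.simps using fA fin2 unfolding A_def by (intro pmf_expectation_bind) auto
  also have "\<dots> \<le> (\<Sum>a\<in>A. pmf (traj \<alpha> s k) a *\<^sub>R GG lam th T a)"
  proof (intro sum_mono)
    fix a assume aA: "a \<in> A"
    obtain i j where ij: "last a = (i,j)" by force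
    have "i + j = fst s + snd s + k" using traj_last[OF aA[unfolded A_def]] ij by simp
    hence c: "2*lam \<le> real (i+j) + 1" "1 \<le> i + j" using lam n1 by auto
    show "pmf (traj \<alpha> s k) a *\<^sub>R measure_pmf.expectation (map_pmf (\<lambda>x. a @ [x]) (step_pmf \<alpha> (last a))) (GG lam th T)
          \<le> pmf (traj \<alpha> s k) a *\<^sub>R GG lam th T a"
      using GG_step[OF a lam(1) c(1) th c(2) T ij] by (simp add: mult_left_mono)
  qed
  also have "\<dots> = measure_pmf.expectation (traj \<alpha> s k) (GG lam th T)"
    unfolding A_def by (rule integral_measure_pmf[symmetric]) (auto simp: traj_fin)
  finally show ?case using Suc by simp
qed

lemma nat_floor_int: fixes x :: real assumes "x \<in> \<int>" "x \<ge> 0" shows "real (nat \<lfloor>x\<rfloor>) = x"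
  using assms by (auto elim!: Ints_cases)

theorem mainTheorem10:
  fixes \<alpha> :: real
  assumes "\<alpha> > 1"
  shows "\<exists>c>0. \<forall>A B \<Lambda> \<Gamma> :: real.
    0 < A \<longrightarrow> A < B \<longrightarrow> 0 \<le> \<Lambda> \<longrightarrow> 0 \<le> \<Gamma> \<longrightarrow>
    A + \<Lambda> \<in> \<int> \<longrightarrow> A - \<Lambda> \<in> \<int> \<longrightarrow> B + \<Gamma> \<in> \<int> \<longrightarrow> B - \<Gamma> \<in> \<int> \<longrightarrow>
    \<Lambda> < A \<longrightarrow> B - \<Gamma> \<ge> A \<longrightarrow> \<Gamma> / B \<le> (1/8) * (\<Lambda> / A) \<longrightarrow>
    visit_prob \<alpha> (nat \<lfloor>A + \<Lambda>\<rfloor>, nat \<lfloor>A - \<Lambda>\<rfloor>)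
      {(x, y). \<exists>l::real. l \<le> \<Gamma> \<and> real x = B + l \<and> real y = B - l}
    \<le> exp (- c * \<Lambda>\<^sup>2 / A)"
  proof (intro exI[of _ "1/16"] conjI allI impI)
  show "(0::real) < 1/16" by simp
  fix A B \<Lambda> \<Gamma> :: real
  assume A0: "0 < A" and AB: "A < B" and L0: "0 \<le> \<Lambda>" and G0: "0 \<le> \<Gamma>"
    and i1: "A + \<Lambda> \<in> \<int>" and i2: "A - \<Lambda> \<in> \<int>" and i3: "B + \<Gamma> \<in> \<int>" and i4: "B - \<Gamma> \<in> \<int>"
    and LA: "\<Lambda> < A" and BGA: "B - \<Gamma> \<ge> A" and ratio: "\<Gamma> / B \<le> (1/8) * (\<Lambda> / A)"
  define a where "a = nat \<lfloor>A + \<Lambda>\<rfloor>"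
  define b where "b = nat \<lfloor>A - \<Lambda>\<rfloor>"
  have ra: "real a = A + \<Lambda>" unfolding a_def using nat_floor_int[OF i1] A0 L0 by simp
  have rb: "real b = A - \<Lambda>" unfolding b_def using nat_floor_int[OF i2] LA by simp
  define T where "T = {(x, y). \<exists>l::real. l \<le> \<Gamma> \<and> real x = B + l \<and> real y = B - l}"
  define lam where "lam = \<Lambda> / 8"
  define th where "th = \<Gamma> / B"
  have B0: "B > 0" using A0 AB by simp
  have lam0: "lam \<ge> 0" unfolding lam_def using L0 by simp
  have th0: "th \<ge> 0" unfolding th_def using G0 B0 by simp
  have sab: "real (fst (a,b) + snd (a,b)) = 2*A" using ra rb by simp
  have n1: "1 \<le> fst (a,b) + snd (a,b)"
  proof -
    have "real (a + b) > 0" using sab A0 by simp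
    thus ?thesis by simp
  qed
  have lam2: "2*lam \<le> real (fst (a,b) + snd (a,b)) + 1" unfolding sab lam_def using LA L0 by simp
  have Tp: "hh lam s \<ge> exp (-lam*th)" if sT: "s \<in> T" for s
  proof -
    obtain x y l where s: "s = (x,y)" and l: "l \<le> \<Gamma>" "real x = B + l" "real y = B - l"
      using sT unfolding T_def by (cases s) auto
    have "real x - real y = 2*l" "real x + real y = 2*B" using l by simp_all
    hence u: "(real x - real y)/(real x + real y) = l / B" by simp
    have "l / B \<le> th" unfolding th_def using l B0 by (simp add: divide_right_mono)
    hence "lam * (l/B) \<le> lam * th" using lam0 by (rule mult_left_mono)
    hence "-lam * th \<le> -lam * (l/B)" by simp
    moreover have "0 \<le> 4*lam^2/(real x + real y)" by simp
    ultimately have "-lam*th \<le> -lam*((real x - real y)/(real x+real y)) + 4*lam^2/(real x+real y)"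
      unfolding u by linarith
    thus ?thesis unfolding hh_def s by simp
  qed
  define K where "K = exp (-lam*th)"
  define E where "E = {p. set p \<inter> T \<noteq> {}}"
  have hs: "hh lam (a,b) = exp (-lam * (\<Lambda>/A) + 2*lam^2/A)"
  proof -
    have d: "real a - real b = 2*\<Lambda>" "real a + real b = 2*A" using ra rb by simp_all
    have "(real a - real b)/(real a + real b) = \<Lambda>/A" unfolding d by simp
    moreover have "4*lam^2/(real a + real b) = 2*lam^2/A" unfolding d by simp
    ultimately show ?thesis unfolding hh_def by simp
  qed
  have bound_k: "measure_pmf.prob (traj \<alpha> (a,b) k) E \<le> exp (- (1/16) * \<Lambda>\<^sup>2 / A)" for k
  proof -
    let ?M = "traj \<alpha> (a,b) k"
    have int: "integrable ?M f" for f :: "_ \<Rightarrow> real" by (rule integrable_measure_pmf_finite[OF traj_fin])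
    have "K * measure_pmf.prob ?M E = K * measure_pmf.expectation ?M (indicator E)"
      by simp
    also have "\<dots> = measure_pmf.expectation ?M (\<lambda>p. K * indicator E p)" by simp
    also have "\<dots> \<le> measure_pmf.expectation ?M (GG lam th T)"
    proof (rule integral_mono[OF int int])
      fix p show "K * indicator E p \<le> GG lam th T p"
        unfolding E_def GG_def K_def using gg_nonneg by (auto simp: indicator_def)
    qed
    also have "\<dots> \<le> hh lam (a,b)" by (rule GG_traj[OF assms lam0 lam2 th0 n1 Tp])
    finally have "K * measure_pmf.prob ?M E \<le> hh lam (a,b)" .
    hence "measure_pmf.prob ?M E \<le> hh lam (a,b) / K" unfolding K_def by (simp add: field_simps)
    also have "\<dots> = exp (-lam * (\<Lambda>/A) + 2*lam^2/A + lam*th)" unfolding hs K_def exp_diff[symmetric] by (simp add: algebra_simps)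
    also have "\<dots> \<le> exp (- (1/16) * \<Lambda>\<^sup>2 / A)"
    proof -
      have "lam * th \<le> lam * ((1/8) * (\<Lambda> / A))" unfolding th_def using ratio lam0 by (rule mult_left_mono)
      moreover have "-lam * (\<Lambda>/A) + 2*lam^2/A + lam * ((1/8) * (\<Lambda> / A)) = -(5/64) * (\<Lambda>^2/A)"
        unfolding lam_def by (simp add: field_simps power2_eq_square)
      moreover have "- (1/16) * \<Lambda>\<^sup>2 / A = -(4/64) * (\<Lambda>^2/A)" by simp
      moreover have "0 \<le> \<Lambda>^2/A" using A0 by simp
      ultimately have "-lam * (\<Lambda>/A) + 2*lam^2/A + lam*th \<le> - (1/16) * \<Lambda>\<^sup>2 / A" by linarith
      thus ?thesis by (subst exp_le_cancel_iff)
    qed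
    finally show ?thesis .
  qed
  show "visit_prob \<alpha> (nat \<lfloor>A + \<Lambda>\<rfloor>, nat \<lfloor>A - \<Lambda>\<rfloor>)
      {(x, y). \<exists>l::real. l \<le> \<Gamma> \<and> real x = B + l \<and> real y = B - l}
    \<le> exp (- (1/16) * \<Lambda>\<^sup>2 / A)"
    unfolding visit_prob_def a_def[symmetric] b_def[symmetric] T_def[symmetric] E_def[symmetric]
    by (rule cSUP_least) (simp, rule bound_k)
qed

end
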